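(* Let $G_1=(V_1,E_1)$ and $G_2=(V_2,E_2)$ be finite simple directed graphs with real costs $c(i\to k)$, $c(ij\to kl)$, $c(i\to\epsilon)$, $c(ij\to\epsilon)$, $c(\epsilon\to k)$, $c(\epsilon\to kl)$ for $i\in V_1$, $k\in V_2$, $ij\in E_1$, $kl\in E_2$. Define program (F1): minimize $$\sum_{i\in V_1}\sum_{k\in V_2}c(i\to k)x_{i,k}+\sum_{ij\in E_1}\sum_{kl\in E_2}c(ij\to kl)y_{ij,kl}+\sum_{i\in V_1}c(i\to\epsilon)u_i+\sum_{k\in V_2}c(\epsilon\to k)v_k+\sum_{ij\in E_1}c(ij\to\epsilon)e_{ij}+\sum_{kl\in E_2}c(\epsilon\to kl)f_{kl}$$ over binary $\mathbf{x},\mathbf{y},\mathbf{u},\mathbf{v},\mathbf{e},\mathbf{f}$ subject to: $u_i+\sum_{k\in V_2}x_{i,k}=1$ ($\forall i\in V_1$); $v_k+\sum_{i\in V_1}x_{i,k}=1$ ($\forall k\in V_2$); $e_{ij}+\sum_{kl\in E_2}y_{ij,kl}=1$ ($\forall ij\in E_1$); $f_{kl}+\sum_{ij\in E_1}y_{ij,kl}=1$ ($\forall kl\in E_2$); $y_{ij,kl}\le x_{i,k}$ and $y_{ij,kl}\le x_{j,l}$ ($\forall (ij,kl)\in E_1\times E_2$). Define program (F2): minimize $$\sum_{i\in V_1}\sum_{k\in V_2}\bigl(c(i\to k)-c(i\to\epsilon)-c(\epsilon\to k)\bigr)x_{i,k}+\sum_{ij\in E_1}\sum_{kl\in E_2}\bigl(c(ij\to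 kl)-c(ij\to\epsilon)-c(\epsilon\to kl)\bigr)y_{ij,kl}+C,$$ with $C=\sum_{i\in V_1}c(i\to\epsilon)+\sum_{k\in V_2}c(\epsilon\to k)+\sum_{ij\in E_1}c(ij\to\epsilon)+\sum_{kl\in E_2}c(\epsilon\to kl)$, over binary $\mathbf{x},\mathbf{y}$ subject to: $\sum_{k\in V_2}x_{i,k}\le1$ ($\forall i\in V_1$); $\sum_{i\in V_1}x_{i,k}\le 1$ ($\forall k\in V_2$); $\sum_{l\in V_2:\,kl\in E_2}y_{ij,kl}\le x_{i,k}$ ($\forall k\in V_2,\ \forall ij\in E_1$); $\sum_{k\in V_2:\,kl\in E_2}y_{ij,kl}\le x_{j,l}$ ($\forall l\in V_2,\ \forall ij\in E_1$). Then the map $(\mathbf{x},\mathbf{y},\mathbf{u},\mathbf{v},\mathbf{e},\mathbf{f})\mapsto(\mathbf{x},\mathbf{y})$ is a bijection from the feasible set of (F1) onto the feasible set of (F2), it preserves the objective value, and consequently (F1) and (F2) have the same optimal value.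
   Context: All variables $x_{i,k},y_{ij,kl},u_i,v_k,e_{ij},f_{kl}$ take values in $\{0,1\}$. Edges of a simple directed graph are ordered pairs of distinct vertices, written $ij$ for $(i,j)$. The optimal value of (F1) is the graph edit distance between $G_1$ and $G_2$ under the given costs. *)

theory Defs
  imports Complex_Main
begin

definition simple_digraph :: "'v set \<Rightarrow> ('v \<times> 'v) set \<Rightarrow> bool" where
  "simple_digraph V E \<longleftrightarrow> finite V \<and> E \<subseteq> V \<times> V \<and> (\<forall>(i,j)\<in>E. i \<noteq> j)"

(* Variable vectors are functions; outside their index set they are fixed to 0
   (so that a vector is determined by its entries on the index set). *)
definition binvec :: "'i set \<Rightarrow> ('i \<Rightarrow> real) \<Rightarrow> bool" where
  "binvec I z \<longleftrightarrow> (\<forall>t\<in>I. z t \<in> {0,1}) \<and> (\<forall>t. t \<notin> I \<longrightarrow> z t = 0)"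

definition binvec2 :: "'i set \<Rightarrow> 'j set \<Rightarrow> ('i \<Rightarrow> 'j \<Rightarrow> real) \<Rightarrow> bool" where
  "binvec2 I J z \<longleftrightarrow> (\<forall>s\<in>I. \<forall>t\<in>J. z s t \<in> {0,1})
      \<and> (\<forall>s t. \<not> (s \<in> I \<and> t \<in> J) \<longrightarrow> z s t = 0)"

type_synonym ('a,'b) F1sol =
  "('a \<Rightarrow> 'b \<Rightarrow> real) \<times> ('a \<times> 'a \<Rightarrow> 'b \<times> 'b \<Rightarrow> real) \<times> ('a \<Rightarrow> real) \<times> ('b \<Rightarrow> real)
   \<times> ('a \<times> 'a \<Rightarrow> real) \<times> ('b \<times> 'b \<Rightarrow> real)"

type_synonym ('a,'b) F2sol =
  "('a \<Rightarrow> 'b \<Rightarrow> real) \<times> ('a \<times> 'a \<Rightarrow> 'b \<times> 'b \<Rightarrow> real)"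

definition F1_feasible ::
  "'a set \<Rightarrow> ('a \<times> 'a) set \<Rightarrow> 'b set \<Rightarrow> ('b \<times> 'b) set \<Rightarrow> ('a,'b) F1sol set" where
  "F1_feasible V1 E1 V2 E2 = {(x,y,u,v,e,f).
      binvec2 V1 V2 x \<and> binvec2 E1 E2 y \<and> binvec V1 u \<and> binvec V2 v \<and> binvec E1 e \<and> binvec E2 f
    \<and> (\<forall>i\<in>V1. u i + (\<Sum>k\<in>V2. x i k) = 1)
    \<and> (\<forall>k\<in>V2. v k + (\<Sum>i\<in>V1. x i k) = 1)
    \<and> (\<forall>ij\<in>E1. e ij + (\<Sum>kl\<in>E2. y ij kl) = 1)
    \<and> (\<forall>kl\<in>E2. f kl + (\<Sum>ij\<in>E1. y ij kl) = 1)
    \<and> (\<forall>(i,j)\<in>E1. \<forall>(k,l)\<in>E2. y (i,j) (k,l) \<le> x i k \<and> y (i,j) (k,l) \<le> x j l)}"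

definition F2_feasible ::
  "'a set \<Rightarrow> ('a \<times> 'a) set \<Rightarrow> 'b set \<Rightarrow> ('b \<times> 'b) set \<Rightarrow> ('a,'b) F2sol set" where
  "F2_feasible V1 E1 V2 E2 = {(x,y).
      binvec2 V1 V2 x \<and> binvec2 E1 E2 y
    \<and> (\<forall>i\<in>V1. (\<Sum>k\<in>V2. x i k) \<le> 1)
    \<and> (\<forall>k\<in>V2. (\<Sum>i\<in>V1. x i k) \<le> 1)
    \<and> (\<forall>k\<in>V2. \<forall>(i,j)\<in>E1. (\<Sum>l\<in>{l\<in>V2. (k,l)\<in>E2}. y (i,j) (k,l)) \<le> x i k)
    \<and> (\<forall>l\<in>V2. \<forall>(i,j)\<in>E1. (\<Sum>k\<in>{k\<in>V2. (k,l)\<in>E2}. y (i,j) (k,l)) \<le> x j l)}"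

(* Costs: cs = substitution of vertices, ce = substitution of edges,
   dv/de = deletion of a vertex/edge of G1, iv/ie = insertion of a vertex/edge of G2. *)
definition F1_obj ::
  "'a set \<Rightarrow> ('a \<times> 'a) set \<Rightarrow> 'b set \<Rightarrow> ('b \<times> 'b) set
   \<Rightarrow> ('a \<Rightarrow> 'b \<Rightarrow> real) \<Rightarrow> ('a \<times> 'a \<Rightarrow> 'b \<times> 'b \<Rightarrow> real)
   \<Rightarrow> ('a \<Rightarrow> real) \<Rightarrow> ('b \<Rightarrow> real) \<Rightarrow> ('a \<times> 'a \<Rightarrow> real) \<Rightarrow> ('b \<times> 'b \<Rightarrow> real)
   \<Rightarrow> ('a,'b) F1sol \<Rightarrow> real" where
  "F1_obj V1 E1 V2 E2 cs ce dv iv de ie = (\<lambda>(x,y,u,v,e,f).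
      (\<Sum>i\<in>V1. \<Sum>k\<in>V2. cs i k * x i k) + (\<Sum>ij\<in>E1. \<Sum>kl\<in>E2. ce ij kl * y ij kl)
    + (\<Sum>i\<in>V1. dv i * u i) + (\<Sum>k\<in>V2. iv k * v k)
    + (\<Sum>ij\<in>E1. de ij * e ij) + (\<Sum>kl\<in>E2. ie kl * f kl))"

definition F2_obj ::
  "'a set \<Rightarrow> ('a \<times> 'a) set \<Rightarrow> 'b set \<Rightarrow> ('b \<times> 'b) set
   \<Rightarrow> ('a \<Rightarrow> 'b \<Rightarrow> real) \<Rightarrow> ('a \<times> 'a \<Rightarrow> 'b \<times> 'b \<Rightarrow> real)
   \<Rightarrow> ('a \<Rightarrow> real) \<Rightarrow> ('b \<Rightarrow> real) \<Rightarrow> ('a \<times> 'a \<Rightarrow> real) \<Rightarrow> ('b \<times> 'b \<Rightarrow> real)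
   \<Rightarrow> ('a,'b) F2sol \<Rightarrow> real" where
  "F2_obj V1 E1 V2 E2 cs ce dv iv de ie = (\<lambda>(x,y).
      (\<Sum>i\<in>V1. \<Sum>k\<in>V2. (cs i k - dv i - iv k) * x i k)
    + (\<Sum>ij\<in>E1. \<Sum>kl\<in>E2. (ce ij kl - de ij - ie kl) * y ij kl)
    + ((\<Sum>i\<in>V1. dv i) + (\<Sum>k\<in>V2. iv k) + (\<Sum>ij\<in>E1. de ij) + (\<Sum>kl\<in>E2. ie kl)))"

definition proj12 :: "('a,'b) F1sol \<Rightarrow> ('a,'b) F2sol" where
  "proj12 = (\<lambda>(x,y,u,v,e,f). (x,y))"

end

theory Submission
  imports Defs
begin

lemma bin_sum_card:
  assumes "finite I" "\<forall>t\<in>I. z t \<in> {0,1::real}"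
  shows "sum z I = real (card {t\<in>I. z t = 1})"
proof -
  have "sum z I = (\<Sum>t\<in>I. if z t = 1 then 1 else 0)"
    using assms(2) by (intro sum.cong) auto
  also have "\<dots> = real (card {t\<in>I. z t = 1})"
    using assms(1) by (simp add: sum.If_cases Int_def)
  finally show ?thesis .
qed

lemma bin_sum_01:
  assumes "finite I" "\<forall>t\<in>I. z t \<in> {0,1::real}" "sum z I \<le> 1"
  shows "sum z I \<in> {0,1}"
proof -
  have "real (card {t\<in>I. z t = 1}) \<le> 1" using bin_sum_card[OF assms(1,2)] assms(3) by simp
  hence "card {t\<in>I. z t = 1} = 0 \<or> card {t\<in>I. z t = 1} = 1" by linarith
  thus ?thesis using bin_sum_card[OF assms(1,2)] by auto
qed

lemma bin_nonneg: "z \<in> {0,1::real} \<Longrightarrow> z \<ge> 0" by auto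

lemma bin_uniq:
  assumes "finite I" "\<forall>t\<in>I. z t \<in> {0,1::real}" "sum z I \<le> 1"
    "a \<in> I" "b \<in> I" "z a = 1" "z b = 1"
  shows "a = b"
proof (rule ccontr)
  assume "a \<noteq> b"
  hence "sum z {a,b} = 2" using assms by simp
  moreover have "sum z {a,b} \<le> sum z I"
    using assms by (intro sum_mono2) auto
  ultimately show False using assms(3) by simp
qed

lemma term_le_sum:
  assumes "finite I" "\<forall>t\<in>I. z t \<ge> (0::real)" "a \<in> I"
  shows "z a \<le> sum z I"
  using member_le_sum[of a I z] assms by auto


lemma sum_regroup:
  assumes "finite V" "E \<subseteq> V \<times> V"
  shows "(\<Sum>kl\<in>E. g kl) = (\<Sum>k\<in>V. \<Sum>l\<in>{l\<in>V. (k,l)\<in>E}. g (k,l))"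
proof -
  have "E = Sigma V (\<lambda>k. {l\<in>V. (k,l)\<in>E})" using assms(2) by auto
  hence "(\<Sum>kl\<in>E. g kl) = (\<Sum>kl\<in>Sigma V (\<lambda>k. {l\<in>V. (k,l)\<in>E}). g kl)" by simp
  also have "\<dots> = (\<Sum>k\<in>V. \<Sum>l\<in>{l\<in>V. (k,l)\<in>E}. g (k,l))"
    using assms(1) by (subst sum.Sigma) auto
  finally show ?thesis .
qed

lemma F1_to_F2:
  assumes g1: "simple_digraph V1 E1" and g2: "simple_digraph V2 E2"
    and s: "(x,y,u,v,e,f) \<in> F1_feasible V1 E1 V2 E2"
  shows "(x,y) \<in> F2_feasible V1 E1 V2 E2"
proof -
  have fV1: "finite V1" and fV2: "finite V2" and E1s: "E1 \<subseteq> V1 \<times> V1" and E2s: "E2 \<subseteq> V2 \<times> V2"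
    using g1 g2 by (auto simp: simple_digraph_def)
  have fE2: "finite E2" using fV2 E2s finite_subset by blast
  from s have bx: "binvec2 V1 V2 x" and by': "binvec2 E1 E2 y" and bu: "binvec V1 u" and bv: "binvec V2 v"
    and be: "binvec E1 e" and bf: "binvec E2 f"
    and ru: "\<forall>i\<in>V1. u i + (\<Sum>k\<in>V2. x i k) = 1"
    and rv: "\<forall>k\<in>V2. v k + (\<Sum>i\<in>V1. x i k) = 1"
    and re: "\<forall>ij\<in>E1. e ij + (\<Sum>kl\<in>E2. y ij kl) = 1"
    and yx: "\<forall>(i,j)\<in>E1. \<forall>(k,l)\<in>E2. y (i,j) (k,l) \<le> x i k \<and> y (i,j) (k,l) \<le> x j l"
    by (auto simp: F1_feasible_def)
  have r1: "\<forall>i\<in>V1. (\<Sum>k\<in>V2. x i k) \<le> 1"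
    using ru bu by (force simp: binvec_def)
  have r2: "\<forall>k\<in>V2. (\<Sum>i\<in>V1. x i k) \<le> 1"
    using rv bv by (force simp: binvec_def)
  have ynn: "\<And>ij kl. y ij kl \<ge> 0" using by' unfolding binvec2_def
    by (metis bin_nonneg order_refl)
  have esum: "\<And>ij. ij \<in> E1 \<Longrightarrow> (\<Sum>kl\<in>E2. y ij kl) \<le> 1"
    using re be by (force simp: binvec_def)
  have r3: "\<forall>k\<in>V2. \<forall>(i,j)\<in>E1. (\<Sum>l\<in>{l\<in>V2. (k,l)\<in>E2}. y (i,j) (k,l)) \<le> x i k"
  proof (intro ballI, clarify)
    fix k i j assume k: "k \<in> V2" and ij: "(i,j) \<in> E1"
    have i: "i \<in> V1" using ij E1s by auto
    have xb: "x i k \<in> {0,1}" using bx i k by (auto simp: binvec2_def)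
    show "(\<Sum>l\<in>{l\<in>V2. (k,l)\<in>E2}. y (i,j) (k,l)) \<le> x i k"
    proof (cases "x i k = 0")
      case True
      have "\<forall>l\<in>{l\<in>V2. (k,l)\<in>E2}. y (i,j) (k,l) = 0"
        using yx ij True ynn by (force intro: antisym)
      then show ?thesis using True by simp
    next
      case False
      hence x1: "x i k = 1" using xb by auto
      have "(\<Sum>l\<in>{l\<in>V2. (k,l)\<in>E2}. y (i,j) (k,l)) = (\<Sum>kl\<in>Pair k ` {l\<in>V2. (k,l)\<in>E2}. y (i,j) kl)"
        by (subst sum.reindex) (auto simp: inj_on_def)
      also have "\<dots> \<le> (\<Sum>kl\<in>E2. y (i,j) kl)"
        using fE2 ynn by (intro sum_mono2) auto
      also have "\<dots> \<le> 1" using esum ij by blast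
      finally show ?thesis using x1 by simp
    qed
  qed
  have r4: "\<forall>l\<in>V2. \<forall>(i,j)\<in>E1. (\<Sum>k\<in>{k\<in>V2. (k,l)\<in>E2}. y (i,j) (k,l)) \<le> x j l"
  proof (intro ballI, clarify)
    fix l i j assume l: "l \<in> V2" and ij: "(i,j) \<in> E1"
    have j: "j \<in> V1" using ij E1s by auto
    have xb: "x j l \<in> {0,1}" using bx j l by (auto simp: binvec2_def)
    show "(\<Sum>k\<in>{k\<in>V2. (k,l)\<in>E2}. y (i,j) (k,l)) \<le> x j l"
    proof (cases "x j l = 0")
      case True
      have "\<forall>k\<in>{k\<in>V2. (k,l)\<in>E2}. y (i,j) (k,l) = 0"
        using yx ij True ynn by (force intro: antisym)
      then show ?thesis using True by simp
    next
      case False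
      hence x1: "x j l = 1" using xb by auto
      have "(\<Sum>k\<in>{k\<in>V2. (k,l)\<in>E2}. y (i,j) (k,l)) = (\<Sum>kl\<in>(\<lambda>k. (k,l)) ` {k\<in>V2. (k,l)\<in>E2}. y (i,j) kl)"
        by (subst sum.reindex) (auto simp: inj_on_def)
      also have "\<dots> \<le> (\<Sum>kl\<in>E2. y (i,j) kl)"
        using fE2 ynn by (intro sum_mono2) auto
      also have "\<dots> \<le> 1" using esum ij by blast
      finally show ?thesis using x1 by simp
    qed
  qed
  show ?thesis unfolding F2_feasible_def using bx by' r1 r2 r3 r4 by auto
qed


definition lift21 :: "'a set \<Rightarrow> ('a \<times> 'a) set \<Rightarrow> 'b set \<Rightarrow> ('b \<times> 'b) set \<Rightarrow> ('a,'b) F2sol \<Rightarrow> ('a,'b) F1sol" where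
  "lift21 V1 E1 V2 E2 = (\<lambda>(x,y). (x, y,
     (\<lambda>i. if i \<in> V1 then 1 - (\<Sum>k\<in>V2. x i k) else 0),
     (\<lambda>k. if k \<in> V2 then 1 - (\<Sum>i\<in>V1. x i k) else 0),
     (\<lambda>ij. if ij \<in> E1 then 1 - (\<Sum>kl\<in>E2. y ij kl) else 0),
     (\<lambda>kl. if kl \<in> E2 then 1 - (\<Sum>ij\<in>E1. y ij kl) else 0)))"

lemma one_minus_bin: "s \<in> {0,1::real} \<Longrightarrow> 1 - s \<in> {0,1}" by auto

lemma F2_to_F1:
  assumes g1: "simple_digraph V1 E1" and g2: "simple_digraph V2 E2"
    and s: "(x,y) \<in> F2_feasible V1 E1 V2 E2"
  shows "lift21 V1 E1 V2 E2 (x,y) \<in> F1_feasible V1 E1 V2 E2"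
proof -
  have fV1: "finite V1" and fV2: "finite V2" and E1s: "E1 \<subseteq> V1 \<times> V1" and E2s: "E2 \<subseteq> V2 \<times> V2"
    using g1 g2 by (auto simp: simple_digraph_def)
  have fE1: "finite E1" using fV1 E1s finite_subset by blast
  have fE2: "finite E2" using fV2 E2s finite_subset by blast
  from s have bx: "binvec2 V1 V2 x" and by': "binvec2 E1 E2 y"
    and r1: "\<forall>i\<in>V1. (\<Sum>k\<in>V2. x i k) \<le> 1"
    and r2: "\<forall>k\<in>V2. (\<Sum>i\<in>V1. x i k) \<le> 1"
    and r3: "\<forall>k\<in>V2. \<forall>(i,j)\<in>E1. (\<Sum>l\<in>{l\<in>V2. (k,l)\<in>E2}. y (i,j) (k,l)) \<le> x i k"
    and r4: "\<forall>l\<in>V2. \<forall>(i,j)\<in>E1. (\<Sum>k\<in>{k\<in>V2. (k,l)\<in>E2}. y (i,j) (k,l)) \<le> x j l"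
    by (auto simp: F2_feasible_def)
  have ynn: "\<And>ij kl. y ij kl \<ge> 0" using by' unfolding binvec2_def
    by (metis bin_nonneg order_refl)
  have yb: "\<And>ij. ij \<in> E1 \<Longrightarrow> \<forall>kl\<in>E2. y ij kl \<in> {0,1}" using by' by (auto simp: binvec2_def)
  have yb2: "\<And>kl. kl \<in> E2 \<Longrightarrow> \<forall>ij\<in>E1. y ij kl \<in> {0,1}" using by' by (auto simp: binvec2_def)
  have xrow: "\<And>i. i \<in> V1 \<Longrightarrow> \<forall>k\<in>V2. x i k \<in> {0,1}" using bx by (auto simp: binvec2_def)
  have xcol: "\<And>k. k \<in> V2 \<Longrightarrow> \<forall>i\<in>V1. x i k \<in> {0,1}" using bx by (auto simp: binvec2_def)
  have yx: "\<forall>(i,j)\<in>E1. \<forall>(k,l)\<in>E2. y (i,j) (k,l) \<le> x i k \<and> y (i,j) (k,l) \<le> x j l"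
  proof (clarify)
    fix i j k l assume ij: "(i,j) \<in> E1" and kl: "(k,l) \<in> E2"
    have k: "k \<in> V2" and l: "l \<in> V2" using kl E2s by auto
    have "y (i,j) (k,l) \<le> (\<Sum>l\<in>{l\<in>V2. (k,l)\<in>E2}. y (i,j) (k,l))"
      using fV2 ynn kl l by (intro term_le_sum) auto
    also have "\<dots> \<le> x i k" using r3 k ij by blast
    finally have a: "y (i,j) (k,l) \<le> x i k" .
    have "y (i,j) (k,l) \<le> (\<Sum>k\<in>{k\<in>V2. (k,l)\<in>E2}. y (i,j) (k,l))"
      using fV2 ynn kl k by (intro term_le_sum[where z="\<lambda>k. y (i,j) (k,l)"]) auto
    also have "\<dots> \<le> x j l" using r4 l ij by blast
    finally show "y (i,j) (k,l) \<le> x i k \<and> y (i,j) (k,l) \<le> x j l" using a by simp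
  qed
  have esum: "\<And>ij. ij \<in> E1 \<Longrightarrow> (\<Sum>kl\<in>E2. y ij kl) \<le> 1"
  proof -
    fix ij assume ij: "ij \<in> E1"
    obtain i j where ijd: "ij = (i,j)" by force
    have i: "i \<in> V1" using ij ijd E1s by auto
    have "(\<Sum>kl\<in>E2. y ij kl) = (\<Sum>k\<in>V2. \<Sum>l\<in>{l\<in>V2. (k,l)\<in>E2}. y (i,j) (k,l))"
      using sum_regroup[OF fV2 E2s] ijd by simp
    also have "\<dots> \<le> (\<Sum>k\<in>V2. x i k)"
      using r3 ij ijd by (intro sum_mono) auto
    also have "\<dots> \<le> 1" using r1 i by blast
    finally show "(\<Sum>kl\<in>E2. y ij kl) \<le> 1" .
  qed
  have fsum: "\<And>kl. kl \<in> E2 \<Longrightarrow> (\<Sum>ij\<in>E1. y ij kl) \<le> 1"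
  proof -
    fix kl assume kl: "kl \<in> E2"
    obtain k l where kld: "kl = (k,l)" by force
    have k: "k \<in> V2" and l: "l \<in> V2" using kl kld E2s by auto
    have finS: "finite {ij\<in>E1. y ij kl = 1}" using fE1 by simp
    have "\<forall>a\<in>{ij\<in>E1. y ij kl = 1}. \<forall>b\<in>{ij\<in>E1. y ij kl = 1}. a = b"
      proof -
      show "\<forall>a\<in>{ij\<in>E1. y ij kl = 1}. \<forall>b\<in>{ij\<in>E1. y ij kl = 1}. a = b"
      proof (clarify)
        fix i j i' j' assume a: "(i,j) \<in> E1" "y (i,j) kl = 1" and b: "(i',j') \<in> E1" "y (i',j') kl = 1"
        have V: "i \<in> V1" "j \<in> V1" "i' \<in> V1" "j' \<in> V1" using a b E1s by auto
        have kl2: "(k,l) \<in> E2" using kl kld by simp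
        have le: "y (i,j) (k,l) \<le> x i k" "y (i,j) (k,l) \<le> x j l"
          "y (i',j') (k,l) \<le> x i' k" "y (i',j') (k,l) \<le> x j' l"
          using yx a(1) b(1) kl2 by fastforce+
        have bb: "x i k \<in> {0,1}" "x j l \<in> {0,1}" "x i' k \<in> {0,1}" "x j' l \<in> {0,1}"
          using xcol[OF k] xcol[OF l] V by auto
        have "x i k = 1" "x j l = 1" "x i' k = 1" "x j' l = 1"
          using le bb a(2) b(2) kld by auto
        moreover note V
        ultimately have "i = i'" "j = j'"
          using bin_uniq[OF fV1 xcol[OF k]] bin_uniq[OF fV1 xcol[OF l]] r2 k l by blast+
        thus "i = i' \<and> j = j'" by simp
      qed
    qed
    hence "card {ij\<in>E1. y ij kl = 1} \<le> 1" using card_le_Suc0_iff_eq[OF finS] by simp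
    thus "(\<Sum>ij\<in>E1. y ij kl) \<le> 1" using bin_sum_card[OF fE1 yb2[OF kl]] by simp
  qed
  let ?u = "\<lambda>i. if i \<in> V1 then 1 - (\<Sum>k\<in>V2. x i k) else 0"
  let ?v = "\<lambda>k. if k \<in> V2 then 1 - (\<Sum>i\<in>V1. x i k) else 0"
  let ?e = "\<lambda>ij. if ij \<in> E1 then 1 - (\<Sum>kl\<in>E2. y ij kl) else 0"
  let ?f = "\<lambda>kl. if kl \<in> E2 then 1 - (\<Sum>ij\<in>E1. y ij kl) else 0"
  have bu: "binvec V1 ?u" unfolding binvec_def
    using one_minus_bin[OF bin_sum_01[OF fV2 xrow]] r1 by auto
  have bv: "binvec V2 ?v" unfolding binvec_def
    using one_minus_bin[OF bin_sum_01[OF fV1 xcol]] r2 by auto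
  have be: "binvec E1 ?e" unfolding binvec_def
    using one_minus_bin[OF bin_sum_01[OF fE2 yb]] esum by auto
  have bf: "binvec E2 ?f" unfolding binvec_def
    using one_minus_bin[OF bin_sum_01[OF fE1 yb2]] fsum by auto
  show ?thesis unfolding lift21_def F1_feasible_def
    using bx by' bu bv be bf yx by auto
qed


lemma lift_proj:
  assumes s: "(x,y,u,v,e,f) \<in> F1_feasible V1 E1 V2 E2"
  shows "lift21 V1 E1 V2 E2 (x,y) = (x,y,u,v,e,f)"
proof -
  from s have bu: "binvec V1 u" and bv: "binvec V2 v"
    and be: "binvec E1 e" and bf: "binvec E2 f"
    and ru: "\<forall>i\<in>V1. u i + (\<Sum>k\<in>V2. x i k) = 1"
    and rv: "\<forall>k\<in>V2. v k + (\<Sum>i\<in>V1. x i k) = 1"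
    and re: "\<forall>ij\<in>E1. e ij + (\<Sum>kl\<in>E2. y ij kl) = 1"
    and rf: "\<forall>kl\<in>E2. f kl + (\<Sum>ij\<in>E1. y ij kl) = 1"
    by (auto simp: F1_feasible_def)
  have "(\<lambda>i. if i \<in> V1 then 1 - (\<Sum>k\<in>V2. x i k) else 0) = u"
    using bu ru by (force simp: binvec_def)
  moreover have "(\<lambda>k. if k \<in> V2 then 1 - (\<Sum>i\<in>V1. x i k) else 0) = v"
    using bv rv by (force simp: binvec_def)
  moreover have "(\<lambda>ij. if ij \<in> E1 then 1 - (\<Sum>kl\<in>E2. y ij kl) else 0) = e"
    using be re by (force simp: binvec_def)
  moreover have "(\<lambda>kl. if kl \<in> E2 then 1 - (\<Sum>ij\<in>E1. y ij kl) else 0) = f"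
    using bf rf by (force simp: binvec_def)
  ultimately show ?thesis unfolding lift21_def by simp
qed

lemma obj_eq:
  assumes s: "(x,y,u,v,e,f) \<in> F1_feasible V1 E1 V2 E2"
  shows "F2_obj V1 E1 V2 E2 cs ce dv iv de ie (x,y) = F1_obj V1 E1 V2 E2 cs ce dv iv de ie (x,y,u,v,e,f)"
proof -
  from s have ru: "\<forall>i\<in>V1. u i = 1 - (\<Sum>k\<in>V2. x i k)"
    and rv: "\<forall>k\<in>V2. v k = 1 - (\<Sum>i\<in>V1. x i k)"
    and re: "\<forall>ij\<in>E1. e ij = 1 - (\<Sum>kl\<in>E2. y ij kl)"
    and rf: "\<forall>kl\<in>E2. f kl = 1 - (\<Sum>ij\<in>E1. y ij kl)"
    by (auto simp: F1_feasible_def algebra_simps)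
  have A: "(\<Sum>i\<in>V1. dv i * u i) = (\<Sum>i\<in>V1. dv i) - (\<Sum>i\<in>V1. \<Sum>k\<in>V2. dv i * x i k)"
    using ru by (simp add: right_diff_distrib sum_distrib_left sum_subtractf)
  have B: "(\<Sum>k\<in>V2. iv k * v k) = (\<Sum>k\<in>V2. iv k) - (\<Sum>i\<in>V1. \<Sum>k\<in>V2. iv k * x i k)"
    using rv by (simp add: right_diff_distrib sum_distrib_left sum_subtractf sum.swap[of _ V1 V2])
  have C: "(\<Sum>ij\<in>E1. de ij * e ij) = (\<Sum>ij\<in>E1. de ij) - (\<Sum>ij\<in>E1. \<Sum>kl\<in>E2. de ij * y ij kl)"
    using re by (simp add: right_diff_distrib sum_distrib_left sum_subtractf)
  have D: "(\<Sum>kl\<in>E2. ie kl * f kl) = (\<Sum>kl\<in>E2. ie kl) - (\<Sum>ij\<in>E1. \<Sum>kl\<in>E2. ie kl * y ij kl)"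
    using rf by (simp add: right_diff_distrib sum_distrib_left sum_subtractf sum.swap[of _ E1 E2])
  have X: "(\<Sum>i\<in>V1. \<Sum>k\<in>V2. (cs i k - dv i - iv k) * x i k) =
     (\<Sum>i\<in>V1. \<Sum>k\<in>V2. cs i k * x i k) - (\<Sum>i\<in>V1. \<Sum>k\<in>V2. dv i * x i k) - (\<Sum>i\<in>V1. \<Sum>k\<in>V2. iv k * x i k)"
    by (simp add: left_diff_distrib sum_subtractf)
  have Y: "(\<Sum>ij\<in>E1. \<Sum>kl\<in>E2. (ce ij kl - de ij - ie kl) * y ij kl) =
     (\<Sum>ij\<in>E1. \<Sum>kl\<in>E2. ce ij kl * y ij kl) - (\<Sum>ij\<in>E1. \<Sum>kl\<in>E2. de ij * y ij kl) - (\<Sum>ij\<in>E1. \<Sum>kl\<in>E2. ie kl * y ij kl)"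
    by (simp add: left_diff_distrib sum_subtractf)
  show ?thesis unfolding F1_obj_def F2_obj_def using A B C D X Y by simp
qed

theorem mainTheorem4:
  fixes V1 :: "'a set" and E1 :: "('a \<times> 'a) set" and V2 :: "'b set" and E2 :: "('b \<times> 'b) set"
    and cs :: "'a \<Rightarrow> 'b \<Rightarrow> real" and ce :: "'a \<times> 'a \<Rightarrow> 'b \<times> 'b \<Rightarrow> real"
    and dv :: "'a \<Rightarrow> real" and iv :: "'b \<Rightarrow> real"
    and de :: "'a \<times> 'a \<Rightarrow> real" and ie :: "'b \<times> 'b \<Rightarrow> real"
  assumes "simple_digraph V1 E1" and "simple_digraph V2 E2"
  shows "bij_betw proj12 (F1_feasible V1 E1 V2 E2) (F2_feasible V1 E1 V2 E2)
    \<and> (\<forall>s\<in>F1_feasible V1 E1 V2 E2.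
         F2_obj V1 E1 V2 E2 cs ce dv iv de ie (proj12 s) = F1_obj V1 E1 V2 E2 cs ce dv iv de ie s)
    \<and> Min (F1_obj V1 E1 V2 E2 cs ce dv iv de ie ` F1_feasible V1 E1 V2 E2)
      = Min (F2_obj V1 E1 V2 E2 cs ce dv iv de ie ` F2_feasible V1 E1 V2 E2)"
proof -
  let ?F1 = "F1_feasible V1 E1 V2 E2" and ?F2 = "F2_feasible V1 E1 V2 E2"
  let ?o1 = "F1_obj V1 E1 V2 E2 cs ce dv iv de ie" and ?o2 = "F2_obj V1 E1 V2 E2 cs ce dv iv de ie"
  have lp: "\<And>s. s \<in> ?F1 \<Longrightarrow> lift21 V1 E1 V2 E2 (proj12 s) = s"
    using lift_proj unfolding proj12_def by fastforce
  have inj: "inj_on proj12 ?F1"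
    by (metis inj_onI lp)
  have sub: "proj12 ` ?F1 \<subseteq> ?F2"
    using F1_to_F2[OF assms] unfolding proj12_def by fastforce
  have sup: "?F2 \<subseteq> proj12 ` ?F1"
  proof
    fix p assume p: "p \<in> ?F2"
    obtain x y where pd: "p = (x,y)" by force
    have "lift21 V1 E1 V2 E2 (x,y) \<in> ?F1" using F2_to_F1[OF assms] p pd by simp
    moreover have "proj12 (lift21 V1 E1 V2 E2 (x,y)) = p" using pd by (simp add: lift21_def proj12_def)
    ultimately show "p \<in> proj12 ` ?F1" by (metis image_eqI)
  qed
  have im: "proj12 ` ?F1 = ?F2" using sub sup by blast
  have bij: "bij_betw proj12 ?F1 ?F2" using inj im by (simp add: bij_betw_def)
  have obj: "\<forall>s\<in>?F1. ?o2 (proj12 s) = ?o1 s"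
  proof
    fix s assume s: "s \<in> ?F1"
    obtain x y u v e f where sd: "s = (x,y,u,v,e,f)" by (cases s) blast
    show "?o2 (proj12 s) = ?o1 s" using obj_eq[of x y u v e f] s sd by (simp add: proj12_def)
  qed
  have "?o1 ` ?F1 = ?o2 ` ?F2"
  proof -
    have "?o1 ` ?F1 = (?o2 \<circ> proj12) ` ?F1" using obj by (intro image_cong) auto
    also have "\<dots> = ?o2 ` (proj12 ` ?F1)" by (rule image_comp[symmetric])
    also have "\<dots> = ?o2 ` ?F2" by (simp only: im)
    finally show ?thesis .
  qed
  thus ?thesis using bij obj by simp
qed

end
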